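(* Let $0\le\alpha\le\tfrac12$, let $X$ be uniformly distributed on $\{-1,1\}^n$, and let $Y_i=X_iZ_i$ for $i=1,\dots,n$, where $Z_1,\dots,Z_n$ are i.i.d., independent of $X$, with $\Pr(Z_i=-1)=\alpha$, $\Pr(Z_i=1)=1-\alpha$. For a Boolean function $f:\{-1,1\}^n\to\{-1,1\}$ and $y\in\{-1,1\}^n$ let $P_y^f=\Pr(f(X)=-1\mid Y=y)$. Let $k\ge1$ be an integer satisfying $(1-2\alpha)\sqrt{2k-1}\le 1$. Then for any balanced Boolean function $f:\{-1,1\}^n\to\{-1,1\}$ (i.e., $\Pr(f(X)=-1)=\tfrac12$), \[ \mathbb{E}_Y\left((1-2P_Y^{f})^{2k}\right)\le (2k-1)^{k}(1-2\alpha)^{2k}. \] *)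

theory Defs
  imports "HOL-Library.FuncSet" Complex_Main
begin

text \<open>The hypercube {-1,1}^n, points are functions on {0..<n} (undefined elsewhere).\<close>
definition cube :: "nat \<Rightarrow> (nat \<Rightarrow> int) set" where
  "cube n = PiE {..<n} (\<lambda>_. {-1, 1})"

text \<open>Joint law of (X,Y): X uniform on the cube, Y_i = X_i Z_i with Z_i i.i.d.,
  P(Z_i = -1) = alpha, independent of X.  Hence
  Pr(X = x, Y = y) = 2^-n * prod_i (if x_i = y_i then 1 - alpha else alpha).\<close>
definition joint_prob :: "real \<Rightarrow> nat \<Rightarrow> (nat \<Rightarrow> int) \<Rightarrow> (nat \<Rightarrow> int) \<Rightarrow> real" where
  "joint_prob \<alpha> n x y = (1 / 2 ^ n) * (\<Prod>i<n. if x i = y i then 1 - \<alpha> else \<alpha>)"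

definition probY :: "real \<Rightarrow> nat \<Rightarrow> (nat \<Rightarrow> int) \<Rightarrow> real" where
  "probY \<alpha> n y = (\<Sum>x\<in>cube n. joint_prob \<alpha> n x y)"

definition condP :: "real \<Rightarrow> nat \<Rightarrow> ((nat \<Rightarrow> int) \<Rightarrow> int) \<Rightarrow> (nat \<Rightarrow> int) \<Rightarrow> real" where
  "condP \<alpha> n f y = (\<Sum>x\<in>{x\<in>cube n. f x = -1}. joint_prob \<alpha> n x y) / probY \<alpha> n y"

definition boolean_fun :: "nat \<Rightarrow> ((nat \<Rightarrow> int) \<Rightarrow> int) \<Rightarrow> bool" where
  "boolean_fun n f \<longleftrightarrow> (\<forall>x\<in>cube n. f x \<in> {-1, 1})"

definition balanced :: "nat \<Rightarrow> ((nat \<Rightarrow> int) \<Rightarrow> int) \<Rightarrow> bool" where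
  "balanced n f \<longleftrightarrow> real (card {x\<in>cube n. f x = -1}) / 2 ^ n = 1 / 2"

end

theory Submission
  imports Defs
begin

lemma pm_ineq:
  fixes a b l :: real
  assumes "0 \<le> a" "0 \<le> b" "0 \<le> l" "l \<le> 1"
  shows "(l*a + (1-l)*b)^k \<le> l*a^k + (1-l)*b^k"
proof (induction k)
  case 0 then show ?case by simp
next
  case (Suc k)
  have nn: "0 \<le> l*a + (1-l)*b" using assms by simp
  have key: "0 \<le> (a - b) * (a^k - b^k)"
  proof (cases "a \<le> b")
    case True
    then have "a^k \<le> b^k" using assms by (simp add: power_mono)
    then show ?thesis using True by (simp add: mult_nonpos_nonpos)
  next
    case False
    then have "b^k \<le> a^k" using assms by (simp add: power_mono)
    then show ?thesis using False by simp
  qed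
  have "(l*a + (1-l)*b)^Suc k = (l*a + (1-l)*b) * (l*a + (1-l)*b)^k" by simp
  also have "\<dots> \<le> (l*a + (1-l)*b) * (l*a^k + (1-l)*b^k)"
    using Suc nn by (rule mult_left_mono)
  also have "\<dots> = l*a^Suc k + (1-l)*b^Suc k - l*(1-l)*((a - b) * (a^k - b^k))"
    by (simp add: algebra_simps)
  also have "\<dots> \<le> l*a^Suc k + (1-l)*b^Suc k"
    using key assms by simp
  finally show ?case .
qed

lemma pointwise_mink:
  fixes u v P Q :: real
  assumes "0 \<le> u" "0 \<le> v" "0 < P" "0 < Q"
  shows "(u+v)^Suc j \<le> ((P+Q)/P)^j * u^Suc j + ((P+Q)/Q)^j * v^Suc j"
proof -
  define l where "l = P/(P+Q)"
  define a where "a = u*(P+Q)/P"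
  define b where "b = v*(P+Q)/Q"
  have l: "0 \<le> l" "l \<le> 1" using assms by (auto simp: l_def)
  have e1: "l*a = u" using assms by (simp add: l_def a_def)
  have ml: "1 - l = Q/(P+Q)" using assms by (simp add: l_def field_simps)
  have e2: "(1-l)*b = v" using assms by (simp add: ml b_def)
  have "(u+v)^Suc j = (l*a + (1-l)*b)^Suc j" by (simp add: e1 e2)
  also have "\<dots> \<le> l*a^Suc j + (1-l)*b^Suc j"
    using l assms by (intro pm_ineq) (auto simp: a_def b_def)
  also have "l*a^Suc j = ((P+Q)/P)^j * u^Suc j"
  proof -
    define c where "c = (P+Q)/P"
    have ac: "a = u * c" by (simp add: a_def c_def)
    have lc: "l * c = 1" using assms by (simp add: l_def c_def)
    have "l*a^Suc j = (l * c) * c^j * u^Suc j"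
      unfolding ac by (simp add: power_mult_distrib mult_ac)
    then show ?thesis using lc by (simp add: c_def)
  qed
  also have "(1-l)*b^Suc j = ((P+Q)/Q)^j * v^Suc j"
  proof -
    define c where "c = (P+Q)/Q"
    have ac: "b = v * c" by (simp add: b_def c_def)
    have lc: "(1-l) * c = 1" using assms by (simp add: ml c_def)
    have "(1-l)*b^Suc j = ((1-l) * c) * c^j * v^Suc j"
      unfolding ac by (simp add: power_mult_distrib mult_ac)
    then show ?thesis using lc by (simp add: c_def)
  qed
  finally show ?thesis .
qed

lemma mink_sum:
  fixes u v :: "'a \<Rightarrow> real" and c P Q :: real
  assumes fin: "finite I" and u0: "\<forall>i\<in>I. 0 \<le> u i" and v0: "\<forall>i\<in>I. 0 \<le> v i"
    and c0: "0 \<le> c" and P0: "0 \<le> P" and Q0: "0 \<le> Q"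
    and hu: "c * (\<Sum>i\<in>I. u i ^ Suc j) \<le> P ^ Suc j"
    and hv: "c * (\<Sum>i\<in>I. v i ^ Suc j) \<le> Q ^ Suc j"
  shows "c * (\<Sum>i\<in>I. (u i + v i) ^ Suc j) \<le> (P + Q) ^ Suc j"
proof (cases "c = 0")
  case True then show ?thesis using P0 Q0 by simp
next
  case False
  then have cpos: "c > 0" using c0 by simp
  show ?thesis
  proof (cases "P = 0")
    case True
    then have "(\<Sum>i\<in>I. u i ^ Suc j) \<le> 0" using hu cpos
      by (simp add: mult_le_0_iff)
    moreover have "\<forall>i\<in>I. 0 \<le> u i ^ Suc j" using u0 by simp
    ultimately have "\<forall>i\<in>I. u i ^ Suc j = 0"
      using sum_nonneg_eq_0_iff[OF fin] by (metis (no_types, lifting) antisym sum_nonneg)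
    then have "\<forall>i\<in>I. u i = 0" by auto
    then have "(\<Sum>i\<in>I. (u i + v i) ^ Suc j) = (\<Sum>i\<in>I. v i ^ Suc j)"
      by (intro sum.cong) auto
    then show ?thesis using hv True by simp
  next
    case Pn: False
    show ?thesis
    proof (cases "Q = 0")
      case True
      then have "(\<Sum>i\<in>I. v i ^ Suc j) \<le> 0" using hv cpos
        by (simp add: mult_le_0_iff)
      moreover have "\<forall>i\<in>I. 0 \<le> v i ^ Suc j" using v0 by simp
      ultimately have "\<forall>i\<in>I. v i ^ Suc j = 0"
        using sum_nonneg_eq_0_iff[OF fin] by (metis (no_types, lifting) antisym sum_nonneg)
      then have "\<forall>i\<in>I. v i = 0" by auto
      then have "(\<Sum>i\<in>I. (u i + v i) ^ Suc j) = (\<Sum>i\<in>I. u i ^ Suc j)"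
        by (intro sum.cong) auto
      then show ?thesis using hu True by simp
    next
      case Qn: False
      have Pp: "P > 0" and Qp: "Q > 0" using P0 Q0 Pn Qn by auto
      define X where "X = ((P+Q)/P)^j"
      define Y where "Y = ((P+Q)/Q)^j"
      have X0: "0 \<le> X" and Y0: "0 \<le> Y" using Pp Qp by (auto simp: X_def Y_def)
      have "(\<Sum>i\<in>I. (u i + v i) ^ Suc j) \<le> (\<Sum>i\<in>I. X * u i ^ Suc j + Y * v i ^ Suc j)"
        using u0 v0 Pp Qp unfolding X_def Y_def by (intro sum_mono pointwise_mink) auto
      also have "\<dots> = X * (\<Sum>i\<in>I. u i ^ Suc j) + Y * (\<Sum>i\<in>I. v i ^ Suc j)"
        by (simp add: sum.distrib sum_distrib_left)
      finally have S: "(\<Sum>i\<in>I. (u i + v i) ^ Suc j) \<le> X * (\<Sum>i\<in>I. u i ^ Suc j) + Y * (\<Sum>i\<in>I. v i ^ Suc j)" .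
      have "c * (\<Sum>i\<in>I. (u i + v i) ^ Suc j) \<le> c * (X * (\<Sum>i\<in>I. u i ^ Suc j) + Y * (\<Sum>i\<in>I. v i ^ Suc j))"
        using S cpos by (intro mult_left_mono) auto
      also have "\<dots> = X * (c * (\<Sum>i\<in>I. u i ^ Suc j)) + Y * (c * (\<Sum>i\<in>I. v i ^ Suc j))"
        by (simp add: algebra_simps)
      also have "\<dots> \<le> X * P ^ Suc j + Y * Q ^ Suc j"
        using hu hv X0 Y0 by (intro add_mono mult_left_mono) auto
      also have "X * P ^ Suc j = (P+Q)^j * P" using Pp by (simp add: X_def power_divide)
      also have "Y * Q ^ Suc j = (P+Q)^j * Q" using Qp by (simp add: Y_def power_divide)
      finally show ?thesis by (simp add: algebra_simps)
    qed
  qed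
qed

lemma choose_step:
  assumes "j < n"
  shows "real (n choose Suc j) * (real j + 1) = real (n choose j) * (real n - real j)"
proof -
  have e: "n - j = Suc (n - Suc j)" using assms by simp
  have f1: "real (n choose Suc j) = fact n / (fact (Suc j) * fact (n - Suc j))"
    using assms by (intro binomial_fact) simp
  have f2: "real (n choose j) = fact n / (fact j * fact (n - j))"
    using assms by (intro binomial_fact) simp
  have f3: "(fact (n - j) :: real) = (real n - real j) * fact (n - Suc j)"
    using assms by (simp add: e)
  have f5: "(fact (Suc j) :: real) = (real j + 1) * fact j" by simp
  define F where "F = (fact n :: real)"
  define a where "a = (fact j :: real)"
  define b where "b = (fact (n - Suc j) :: real)"
  have a0: "a \<noteq> 0" "b \<noteq> 0" by (simp_all add: a_def b_def)
  have nj: "real n - real j \<noteq> 0" using assms by simp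
  have "real (n choose Suc j) * (real j + 1) = F / (a*b)"
  proof -
    have jp: "real j + 1 > 0" by simp
    have "real (n choose Suc j) = F / ((real j + 1) * (a * b))"
      unfolding f1 f5 F_def a_def b_def by (simp add: mult.assoc)
    then show ?thesis using jp a0 by simp
  qed
  moreover have "real (n choose j) * (real n - real j) = F / (a*b)"
    unfolding f2 f3 F_def[symmetric] a_def[symmetric] b_def[symmetric]
    using a0 nj by (simp add: field_simps)
  ultimately show ?thesis by simp
qed

lemma binom_ineq:
  assumes "i \<le> k"
  shows "real (2*k choose (2*i)) \<le> real (k choose i) * (2*real k - 1)^i"
  using assms
proof (induction i)
  case 0 then show ?case by simp
next
  case (Suc i)
  define R where "R = 2*real k - 1"
  define a0 where "a0 = real (2*k choose (2*i))"
  define a1 where "a1 = real (2*k choose Suc (2*i))"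
  define a2 where "a2 = real (2*k choose Suc (Suc (2*i)))"
  define b0 where "b0 = real (k choose i)"
  define b1 where "b1 = real (k choose Suc i)"
  have ik: "i < k" using Suc by simp
  have IH: "a0 \<le> b0 * R^i" using Suc ik unfolding a0_def b0_def R_def by simp
  have e1: "a1 * (2*real i + 1) = a0 * (2*real k - 2*real i)"
    unfolding a1_def a0_def using choose_step[of "2*i" "2*k"] ik by simp
  have e2: "a2 * (2*real i + 2) = a1 * (2*real k - 2*real i - 1)"
    unfolding a2_def a1_def using choose_step[of "Suc (2*i)" "2*k"] ik by (simp add: algebra_simps)
  have e3: "b1 * (real i + 1) = b0 * (real k - real i)"
    unfolding b1_def b0_def using choose_step[of i k] ik by simp
  have ki: "real i + 1 \<le> real k" using ik by simp
  have R1: "R \<ge> 1" using ik by (simp add: R_def)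
  have b1nn: "b1 \<ge> 0" "b0 \<ge> 0" by (simp_all add: b1_def b0_def)
  have "a2 * (2*real i + 2) * (2*real i + 1) = a0 * (2*real k - 2*real i) * (2*real k - 2*real i - 1)"
    using e1 e2 by (metis mult.assoc mult.commute)
  also have "\<dots> \<le> b0 * R^i * (2*real k - 2*real i) * (2*real k - 2*real i - 1)"
    using IH ki by (intro mult_right_mono) auto
  also have "\<dots> = 2 * (b0 * (real k - real i)) * R^i * (2*real k - 2*real i - 1)"
    by (simp add: algebra_simps)
  also have "\<dots> = 2 * (b1 * (real i + 1)) * R^i * (2*real k - 2*real i - 1)"
    using e3 by simp
  finally have s1: "(a2 * (2*real i + 1)) * (2*real i + 2) \<le> (b1 * R^i * (2*real k - 2*real i - 1)) * (2*real i + 2)"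
    by (simp add: algebra_simps)
  have s2: "a2 * (2*real i + 1) \<le> b1 * R^i * (2*real k - 2*real i - 1)"
    using s1 by (simp add: mult_le_cancel_right)
  also have "\<dots> \<le> b1 * R^i * (R * (2*real i + 1))"
    using b1nn R1 ki unfolding R_def by (intro mult_left_mono) (auto simp: algebra_simps)
  finally have "(a2) * (2*real i + 1) \<le> (b1 * R^Suc i) * (2*real i + 1)"
    by (simp add: algebra_simps)
  then have "a2 \<le> b1 * R^Suc i" by (simp add: mult_le_cancel_right)
  then show ?case by (simp add: a2_def b1_def R_def)
qed

lemma sum_split_eo:
  fixes h :: "nat \<Rightarrow> real"
  shows "(\<Sum>j\<le>2*k. h j) = (\<Sum>i\<le>k. h (2*i)) + (\<Sum>i<k. h (2*i+1))"
  by (induction k) (simp_all add: algebra_simps)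

lemma two_point:
  fixes A B \<sigma> :: real
  assumes hs: "\<sigma>^2 * (2*real k - 1) \<le> 1" and k1: "k \<ge> 1"
  shows "(A + \<sigma>*B)^(2*k) + (A - \<sigma>*B)^(2*k) \<le> 2*(A^2+B^2)^k"
proof -
  define h where "h j = real (2*k choose j) * ((\<sigma>*B)^j + (-(\<sigma>*B))^j) * A^(2*k-j)" for j
  have "(A + \<sigma>*B)^(2*k) = (\<Sum>j\<le>2*k. real (2*k choose j) * (\<sigma>*B)^j * A^(2*k-j))"
    using binomial_ring[of "\<sigma>*B" A "2*k"] by (simp add: add.commute)
  moreover have "(A - \<sigma>*B)^(2*k) = (\<Sum>j\<le>2*k. real (2*k choose j) * (-(\<sigma>*B))^j * A^(2*k-j))"
    using binomial_ring[of "-(\<sigma>*B)" A "2*k"] by (simp add: add.commute)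
  ultimately have "(A + \<sigma>*B)^(2*k) + (A - \<sigma>*B)^(2*k) = (\<Sum>j\<le>2*k. h j)"
    by (simp add: h_def sum.distrib[symmetric] algebra_simps)
  also have "\<dots> = (\<Sum>i\<le>k. h (2*i)) + (\<Sum>i<k. h (2*i+1))" by (rule sum_split_eo)
  also have "(\<Sum>i<k. h (2*i+1)) = 0" by (simp add: h_def)
  also have "(\<Sum>i\<le>k. h (2*i)) \<le> (\<Sum>i\<le>k. 2 * (real (k choose i) * (B^2)^i * (A^2)^(k-i)))"
  proof (intro sum_mono)
    fix i assume "i \<in> {..k}"
    then have ik: "i \<le> k" by simp
    define W where "W = (B^2)^i * (A^2)^(k-i)"
    have W0: "W \<ge> 0" by (simp add: W_def)
    have m1: "(-(\<sigma>*B))^(2*i) = (\<sigma>^2)^i * (B^2)^i"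
      by (simp add: power_mult power_mult_distrib)
    have m2: "(\<sigma>*B)^(2*i) = (\<sigma>^2)^i * (B^2)^i"
      by (simp add: power_mult power_mult_distrib)
    have m3: "A^(2*k - 2*i) = (A^2)^(k-i)"
      by (simp add: power_mult diff_mult_distrib2[symmetric])
    have hi: "h (2*i) = 2 * (real (2*k choose (2*i)) * (\<sigma>^2)^i) * W"
      unfolding h_def W_def m1 m2 m3 by (simp add: algebra_simps)
    have R1: "2*real k - 1 \<ge> 1" using k1 by simp
    have "real (2*k choose (2*i)) * (\<sigma>^2)^i \<le> real (k choose i) * (2*real k - 1)^i * (\<sigma>^2)^i"
      using binom_ineq[OF ik] by (intro mult_right_mono) auto
    also have "\<dots> = real (k choose i) * ((\<sigma>^2) * (2*real k - 1))^i"
      by (simp add: power_mult_distrib)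
    also have "\<dots> \<le> real (k choose i) * 1"
      using hs R1 by (intro mult_left_mono power_le_one) auto
    finally have "real (2*k choose (2*i)) * (\<sigma>^2)^i \<le> real (k choose i)" by simp
    from mult_right_mono[OF this W0]
    have "h (2*i) \<le> 2 * (real (k choose i) * W)" unfolding hi by linarith
    then show "h (2*i) \<le> 2 * (real (k choose i) * (B^2)^i * (A^2)^(k-i))"
      by (simp add: W_def mult.assoc)
  qed
  also have "\<dots> = 2*(A^2+B^2)^k"
    using binomial_ring[of "B^2" "A^2" k] by (simp add: sum_distrib_left add.commute)
  finally show ?thesis by simp
qed

definition wt :: "real \<Rightarrow> int \<Rightarrow> int \<Rightarrow> real" where
  "wt r a b = (1 + r * real_of_int a * real_of_int b) / 2"

definition Top :: "real \<Rightarrow> nat \<Rightarrow> ((nat \<Rightarrow> int) \<Rightarrow> real) \<Rightarrow> (nat \<Rightarrow> int) \<Rightarrow> real" where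
  "Top r n g y = (\<Sum>x\<in>cube n. g x * (\<Prod>i<n. wt r (x i) (y i)))"

lemma finite_cube: "finite (cube n)"
  unfolding cube_def by (simp add: finite_PiE)

lemma cube_Suc_sum:
  fixes h :: "(nat \<Rightarrow> int) \<Rightarrow> real"
  shows "(\<Sum>z\<in>cube (Suc n). h z) = (\<Sum>x\<in>cube n. h (x(n:=1)) + h (x(n:=-1)))"
proof -
  have ce: "cube (Suc n) = (\<lambda>(y,g). g(n:=y)) ` ({-1,1} \<times> cube n)"
    unfolding cube_def lessThan_Suc by (rule PiE_insert_eq)
  have inj: "inj_on (\<lambda>(y,g). g(n:=y)) ({-1::int,1} \<times> cube n)"
    unfolding cube_def using inj_combinator[of n "{..<n}" "\<lambda>_. {-1::int,1}"] by simp
  have "(\<Sum>z\<in>cube (Suc n). h z) = (\<Sum>p\<in>{-1::int,1} \<times> cube n. h ((\<lambda>(y,g). g(n:=y)) p))"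
    unfolding ce by (rule sum.reindex[OF inj, unfolded comp_def])
  also have "\<dots> = (\<Sum>(y,g)\<in>{-1::int,1} \<times> cube n. h (g(n:=y)))"
    by (rule sum.cong) auto
  also have "\<dots> = (\<Sum>y\<in>{-1::int,1}. \<Sum>g\<in>cube n. h (g(n:=y)))"
    by (rule sum.cartesian_product[symmetric])
  also have "\<dots> = (\<Sum>g\<in>cube n. h (g(n:=-1))) + (\<Sum>g\<in>cube n. h (g(n:=1)))"
    by simp
  also have "\<dots> = (\<Sum>x\<in>cube n. h (x(n:=1)) + h (x(n:=-1)))"
    by (simp add: sum.distrib)
  finally show ?thesis .
qed

lemma Top_upd: "Top r n g (y(n:=t)) = Top r n g y"
  unfolding Top_def by (intro sum.cong refl arg_cong2[where f="(*)"] prod.cong) auto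

lemma Top_Suc:
  "Top r (Suc n) g y = wt r 1 (y n) * Top r n (\<lambda>x. g (x(n:=1))) y
                      + wt r (-1) (y n) * Top r n (\<lambda>x. g (x(n:=-1))) y"
proof -
  have p: "(\<Prod>i<n. wt r ((x(n:=t)) i) (y i)) = (\<Prod>i<n. wt r (x i) (y i))" for x and t :: int
    by (intro prod.cong) auto
  show ?thesis
    unfolding Top_def cube_Suc_sum prod.lessThan_Suc p
    by (simp add: sum.distrib sum_distrib_left algebra_simps)
qed

lemma Top_avg: "Top r n (\<lambda>x. (p x + q x)/2) y = (Top r n p y + Top r n q y)/2"
  unfolding Top_def by (simp add: sum.distrib sum_divide_distrib[symmetric] algebra_simps add_divide_distrib)

lemma Top_dif: "Top r n (\<lambda>x. (p x - q x)/2) y = (Top r n p y - Top r n q y)/2"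
  unfolding Top_def by (simp add: sum_subtractf sum_divide_distrib[symmetric] algebra_simps diff_divide_distrib)

lemma sum_Top_Suc:
  fixes F :: "real \<Rightarrow> real"
  shows "(\<Sum>z\<in>cube (Suc n). F (Top r (Suc n) g z)) =
    (\<Sum>y\<in>cube n. F (Top r n (\<lambda>x. (g (x(n:=1)) + g (x(n:=-1)))/2) y + r * Top r n (\<lambda>x. (g (x(n:=1)) - g (x(n:=-1)))/2) y)
                 + F (Top r n (\<lambda>x. (g (x(n:=1)) + g (x(n:=-1)))/2) y - r * Top r n (\<lambda>x. (g (x(n:=1)) - g (x(n:=-1)))/2) y))"
  unfolding cube_Suc_sum Top_avg Top_dif
  by (intro sum.cong refl arg_cong2[where f="(+)"] arg_cong[where f=F])
     (simp_all add: Top_Suc Top_upd wt_def field_simps)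

lemma cube_0: "cube 0 = {\<lambda>_. undefined}"
  unfolding cube_def by simp

lemma Top_0: "Top r 0 g y = g (\<lambda>_. undefined)"
  unfolding Top_def cube_0 by simp

lemma contraction:
  assumes "r^2 \<le> 1"
  shows "(\<Sum>y\<in>cube n. (Top r n g y)^2) \<le> (\<Sum>x\<in>cube n. (g x)^2)"
proof (induction n arbitrary: g)
  case 0 then show ?case by (simp add: cube_0 Top_0)
next
  case (Suc n)
  define a where "a = (\<lambda>x. (g (x(n:=1)) + g (x(n:=-1)))/2)"
  define b where "b = (\<lambda>x. (g (x(n:=1)) - g (x(n:=-1)))/2)"
  have "(\<Sum>z\<in>cube (Suc n). (Top r (Suc n) g z)^2)
      = (\<Sum>y\<in>cube n. (Top r n a y + r * Top r n b y)^2 + (Top r n a y - r * Top r n b y)^2)"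
    unfolding a_def b_def by (rule sum_Top_Suc)
  also have "\<dots> = (\<Sum>y\<in>cube n. 2 * (Top r n a y)^2 + 2 * r^2 * (Top r n b y)^2)"
    by (intro sum.cong refl) (simp add: power2_eq_square algebra_simps)
  also have "\<dots> \<le> (\<Sum>y\<in>cube n. 2 * (Top r n a y)^2 + 2 * (Top r n b y)^2)"
    using assms by (intro sum_mono add_left_mono mult_right_mono) auto
  also have "\<dots> = 2 * (\<Sum>y\<in>cube n. (Top r n a y)^2) + 2 * (\<Sum>y\<in>cube n. (Top r n b y)^2)"
    by (simp add: sum.distrib sum_distrib_left)
  also have "\<dots> \<le> 2 * (\<Sum>x\<in>cube n. (a x)^2) + 2 * (\<Sum>x\<in>cube n. (b x)^2)"
    using Suc.IH[of a] Suc.IH[of b] by simp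
  also have "\<dots> = (\<Sum>x\<in>cube n. 2 * (a x)^2 + 2 * (b x)^2)"
    by (simp add: sum.distrib sum_distrib_left)
  also have "\<dots> = (\<Sum>x\<in>cube n. (g (x(n:=1)))^2 + (g (x(n:=-1)))^2)"
    by (intro sum.cong refl) (simp add: a_def b_def power2_eq_square field_simps)
  also have "\<dots> = (\<Sum>z\<in>cube (Suc n). (g z)^2)"
    by (rule cube_Suc_sum[symmetric])
  finally show ?case .
qed

lemma variance:
  assumes "r^2 \<le> 1"
  shows "(\<Sum>y\<in>cube n. (Top r n g y)^2) \<le> (1 - r^2) * (\<Sum>x\<in>cube n. g x)^2 / 2^n + r^2 * (\<Sum>x\<in>cube n. (g x)^2)"
proof (induction n arbitrary: g)
  case 0 then show ?case by (simp add: cube_0 Top_0 algebra_simps)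
next
  case (Suc n)
  define a where "a = (\<lambda>x. (g (x(n:=1)) + g (x(n:=-1)))/2)"
  define b where "b = (\<lambda>x. (g (x(n:=1)) - g (x(n:=-1)))/2)"
  have r2: "0 \<le> r^2" by simp
  have "(\<Sum>z\<in>cube (Suc n). (Top r (Suc n) g z)^2)
      = (\<Sum>y\<in>cube n. (Top r n a y + r * Top r n b y)^2 + (Top r n a y - r * Top r n b y)^2)"
    unfolding a_def b_def by (rule sum_Top_Suc)
  also have "\<dots> = (\<Sum>y\<in>cube n. 2 * (Top r n a y)^2 + 2 * r^2 * (Top r n b y)^2)"
    by (intro sum.cong refl) (simp add: power2_eq_square algebra_simps)
  also have "\<dots> = 2 * (\<Sum>y\<in>cube n. (Top r n a y)^2) + 2 * r^2 * (\<Sum>y\<in>cube n. (Top r n b y)^2)"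
    by (simp add: sum.distrib sum_distrib_left)
  also have "\<dots> \<le> 2 * ((1 - r^2) * (\<Sum>x\<in>cube n. a x)^2 / 2^n + r^2 * (\<Sum>x\<in>cube n. (a x)^2))
                   + 2 * r^2 * (\<Sum>x\<in>cube n. (b x)^2)"
    using Suc.IH[of a] contraction[OF assms, of n b] r2
    by (intro add_mono mult_left_mono) auto
  also have "\<dots> = (1 - r^2) * (\<Sum>z\<in>cube (Suc n). g z)^2 / 2^Suc n + r^2 * (\<Sum>z\<in>cube (Suc n). (g z)^2)"
  proof -
    have s1: "(\<Sum>z\<in>cube (Suc n). g z) = 2 * (\<Sum>x\<in>cube n. a x)"
    proof -
      have "(\<Sum>z\<in>cube (Suc n). g z) = (\<Sum>x\<in>cube n. 2 * a x)"
        unfolding cube_Suc_sum by (intro sum.cong refl) (simp add: a_def)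
      then show ?thesis by (simp add: sum_distrib_left)
    qed
    have s2: "(\<Sum>z\<in>cube (Suc n). (g z)^2) = 2 * (\<Sum>x\<in>cube n. (a x)^2) + 2 * (\<Sum>x\<in>cube n. (b x)^2)"
    proof -
      have "(\<Sum>z\<in>cube (Suc n). (g z)^2) = (\<Sum>x\<in>cube n. 2 * (a x)^2 + 2 * (b x)^2)"
        unfolding cube_Suc_sum by (intro sum.cong refl) (simp add: a_def b_def power2_eq_square field_simps)
      then show ?thesis by (simp add: sum.distrib sum_distrib_left)
    qed
    show ?thesis unfolding s1 s2 by (simp add: power2_eq_square field_simps)
  qed
  finally show ?case .
qed

lemma hyper:
  fixes \<sigma> \<tau> :: real
  assumes hs: "\<sigma>^2 * (2*real (Suc j) - 1) \<le> 1"
  shows "(\<Sum>y\<in>cube n. (Top (\<sigma>*\<tau>) n g y)^(2*Suc j)) / 2^n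
           \<le> ((\<Sum>y\<in>cube n. (Top \<tau> n g y)^2) / 2^n)^Suc j"
proof (induction n arbitrary: g)
  case 0 then show ?case by (simp add: cube_0 Top_0 power_mult power2_eq_square mult.assoc)
next
  case (Suc n)
  define m where "m = Suc j"
  define \<rho> where "\<rho> = \<sigma>*\<tau>"
  define a where "a = (\<lambda>x. (g (x(n:=1)) + g (x(n:=-1)))/2)"
  define b where "b = (\<lambda>x. (g (x(n:=1)) - g (x(n:=-1)))/2)"
  define Ar where "Ar = Top \<rho> n a"
  define Br where "Br = Top \<rho> n b"
  define At where "At = Top \<tau> n a"
  define Bt where "Bt = Top \<tau> n b"
  define c where "c = 1 / (2::real)^n"
  define P where "P = (\<Sum>y\<in>cube n. (At y)^2) / 2^n"
  define Q where "Q = \<tau>^2 * ((\<Sum>y\<in>cube n. (Bt y)^2) / 2^n)"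
  have IHa: "(\<Sum>y\<in>cube n. (Ar y)^(2*m)) / 2^n \<le> P^m"
    using Suc.IH[of a] by (simp add: Ar_def At_def P_def \<rho>_def m_def)
  have IHb: "(\<Sum>y\<in>cube n. (Br y)^(2*m)) / 2^n \<le> ((\<Sum>y\<in>cube n. (Bt y)^2) / 2^n)^m"
    using Suc.IH[of b] by (simp add: Br_def Bt_def \<rho>_def m_def)
  have "(\<Sum>z\<in>cube (Suc n). (Top \<rho> (Suc n) g z)^(2*m))
      = (\<Sum>y\<in>cube n. (Ar y + \<rho> * Br y)^(2*m) + (Ar y - \<rho> * Br y)^(2*m))"
    unfolding Ar_def Br_def a_def b_def by (rule sum_Top_Suc)
  also have "\<dots> \<le> (\<Sum>y\<in>cube n. 2 * ((Ar y)^2 + (\<tau> * Br y)^2)^m)"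
  proof (intro sum_mono)
    fix y
    have "(Ar y + \<sigma> * (\<tau> * Br y))^(2*m) + (Ar y - \<sigma> * (\<tau> * Br y))^(2*m) \<le> 2 * ((Ar y)^2 + (\<tau> * Br y)^2)^m"
      using two_point[of \<sigma> m "Ar y" "\<tau> * Br y"] hs by (simp add: m_def)
    then show "(Ar y + \<rho> * Br y)^(2*m) + (Ar y - \<rho> * Br y)^(2*m) \<le> 2 * ((Ar y)^2 + (\<tau> * Br y)^2)^m"
      by (simp add: \<rho>_def mult.assoc)
  qed
  also have "\<dots> = 2 * (\<Sum>y\<in>cube n. ((Ar y)^2 + (\<tau> * Br y)^2)^m)"
    by (simp add: sum_distrib_left)
  finally have L0: "(\<Sum>z\<in>cube (Suc n). (Top \<rho> (Suc n) g z)^(2*m))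
      \<le> 2 * (\<Sum>y\<in>cube n. ((Ar y)^2 + (\<tau> * Br y)^2)^m)" .
  have L: "(\<Sum>z\<in>cube (Suc n). (Top \<rho> (Suc n) g z)^(2*m)) / 2^Suc n
      \<le> c * (\<Sum>y\<in>cube n. ((Ar y)^2 + (\<tau> * Br y)^2)^m)"
  proof -
    have "(\<Sum>z\<in>cube (Suc n). (Top \<rho> (Suc n) g z)^(2*m)) / 2^Suc n
      \<le> (2 * (\<Sum>y\<in>cube n. ((Ar y)^2 + (\<tau> * Br y)^2)^m)) / 2^Suc n"
      using L0 by (intro divide_right_mono) auto
    then show ?thesis by (simp add: c_def)
  qed
  have P0: "0 \<le> P" by (simp add: P_def sum_nonneg)
  have Q0: "0 \<le> Q" by (simp add: Q_def sum_nonneg)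
  have hu: "c * (\<Sum>y\<in>cube n. ((Ar y)^2)^Suc j) \<le> P^Suc j"
  proof -
    have e: "((Ar y)^2)^Suc j = (Ar y)^(2*m)" for y unfolding m_def by (rule power_mult[symmetric])
    show ?thesis unfolding e using IHa by (simp add: c_def m_def)
  qed
  have hv: "c * (\<Sum>y\<in>cube n. ((\<tau> * Br y)^2)^Suc j) \<le> Q^Suc j"
  proof -
    have "c * (\<Sum>y\<in>cube n. ((\<tau> * Br y)^2)^Suc j) = (\<tau>^2)^m * ((\<Sum>y\<in>cube n. (Br y)^(2*m)) / 2^n)"
    proof -
      have e2: "((\<tau> * Br y)^2)^Suc j = (\<tau>^2)^m * (Br y)^(2*m)" for y
      proof -
        have "((\<tau> * Br y)^2)^Suc j = (\<tau>^2 * (Br y)^2)^m" by (simp only: m_def power_mult_distrib)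
        also have "\<dots> = (\<tau>^2)^m * ((Br y)^2)^m" by (simp only: power_mult_distrib)
        also have "\<dots> = (\<tau>^2)^m * (Br y)^(2*m)" by (simp only: power_mult)
        finally show ?thesis .
      qed
      show ?thesis unfolding e2 sum_distrib_left[symmetric] c_def by simp
    qed
    also have "\<dots> \<le> (\<tau>^2)^m * ((\<Sum>y\<in>cube n. (Bt y)^2) / 2^n)^m"
      using IHb by (intro mult_left_mono) auto
    also have "\<dots> = Q^Suc j" by (simp only: Q_def m_def power_mult_distrib)
    finally show ?thesis .
  qed
  have M: "c * (\<Sum>y\<in>cube n. ((Ar y)^2 + (\<tau> * Br y)^2)^Suc j) \<le> (P + Q)^Suc j"
    by (rule mink_sum[OF finite_cube _ _ _ P0 Q0 hu hv]) (auto simp: c_def)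
  have PQ: "P + Q = (\<Sum>z\<in>cube (Suc n). (Top \<tau> (Suc n) g z)^2) / 2^Suc n"
  proof -
    have "(\<Sum>z\<in>cube (Suc n). (Top \<tau> (Suc n) g z)^2)
      = (\<Sum>y\<in>cube n. (At y + \<tau> * Bt y)^2 + (At y - \<tau> * Bt y)^2)"
      unfolding At_def Bt_def a_def b_def by (rule sum_Top_Suc)
    also have "\<dots> = (\<Sum>y\<in>cube n. 2 * (At y)^2 + 2 * \<tau>^2 * (Bt y)^2)"
      by (intro sum.cong refl) (simp add: power2_eq_square algebra_simps)
    also have "\<dots> = 2 * (\<Sum>y\<in>cube n. (At y)^2) + 2 * \<tau>^2 * (\<Sum>y\<in>cube n. (Bt y)^2)"
      by (simp add: sum.distrib sum_distrib_left)
    finally show ?thesis by (simp add: P_def Q_def field_simps)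
  qed
  show ?case using L M unfolding PQ \<rho>_def[symmetric] m_def by simp
qed

lemma Top_one: "Top r n (\<lambda>_. 1) y = 1"
proof (induction n arbitrary: y)
  case 0 then show ?case by (simp add: Top_0)
next
  case (Suc n) then show ?case by (simp add: Top_Suc wt_def field_simps)
qed

lemma card_cube: "card (cube n) = 2^n"
  unfolding cube_def by (simp add: card_PiE numeral_2_eq_2)

lemma wt_eq:
  assumes "a \<in> {-1,1}" "b \<in> {-1,1}"
  shows "(if a = b then 1 - \<alpha> else \<alpha>) = wt (1 - 2*\<alpha>) a b"
  using assms by (auto simp: wt_def)

lemma joint_eq:
  assumes "x \<in> cube n" "y \<in> cube n"
  shows "joint_prob \<alpha> n x y = (1/2^n) * (\<Prod>i<n. wt (1 - 2*\<alpha>) (x i) (y i))"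
proof -
  have "(\<Prod>i<n. if x i = y i then 1 - \<alpha> else \<alpha>) = (\<Prod>i<n. wt (1 - 2*\<alpha>) (x i) (y i))"
    using assms by (intro prod.cong refl wt_eq) (auto simp: cube_def PiE_def Pi_def)
  then show ?thesis by (simp add: joint_prob_def)
qed

theorem lemma1:
  fixes \<alpha> :: real and n k :: nat and f :: "(nat \<Rightarrow> int) \<Rightarrow> int"
  assumes "0 \<le> \<alpha>" and "\<alpha> \<le> 1 / 2"
    and "k \<ge> 1"
    and "(1 - 2 * \<alpha>) * sqrt (2 * real k - 1) \<le> 1"
    and "boolean_fun n f"
    and "balanced n f"
  shows "(\<Sum>y\<in>cube n. probY \<alpha> n y * (1 - 2 * condP \<alpha> n f y) ^ (2 * k))
           \<le> (2 * real k - 1) ^ k * (1 - 2 * \<alpha>) ^ (2 * k)"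
proof -
  define \<rho> where "\<rho> = 1 - 2*\<alpha>"
  define F where "F = (\<lambda>x. real_of_int (f x))"
  define W where "W = (\<lambda>y x. \<Prod>i<n. wt \<rho> (x i) (y i))"
  have fin: "finite (cube n)" by (rule finite_cube)
  have \<rho>0: "0 \<le> \<rho>" using assms by (simp add: \<rho>_def)
  have fv: "f x = -1 \<or> f x = 1" if "x \<in> cube n" for x
    using assms(5) that by (auto simp: boolean_fun_def)
  have pY: "probY \<alpha> n y = 1/2^n" if y: "y \<in> cube n" for y
  proof -
    have "probY \<alpha> n y = (\<Sum>x\<in>cube n. (1/2^n) * W y x)"
      unfolding probY_def W_def \<rho>_def using y by (intro sum.cong refl joint_eq) auto
    also have "\<dots> = (1/2^n) * Top \<rho> n (\<lambda>_. 1) y"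
      by (simp add: Top_def W_def sum_distrib_left)
    finally show ?thesis by (simp add: Top_one)
  qed
  have cP: "1 - 2 * condP \<alpha> n f y = Top \<rho> n F y" if y: "y \<in> cube n" for y
  proof -
    have "(\<Sum>x\<in>{x\<in>cube n. f x = -1}. joint_prob \<alpha> n x y) = (\<Sum>x\<in>{x\<in>cube n. f x = -1}. (1/2^n) * W y x)"
      unfolding W_def \<rho>_def using y by (intro sum.cong refl joint_eq) auto
    then have c1: "condP \<alpha> n f y = (\<Sum>x\<in>{x\<in>cube n. f x = -1}. W y x)"
      unfolding condP_def pY[OF y] by (simp add: sum_divide_distrib[symmetric])
    have "Top \<rho> n F y = (\<Sum>x\<in>cube n. W y x - 2 * (if f x = -1 then W y x else 0))"
      unfolding Top_def F_def
    proof (intro sum.cong refl)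
      fix x assume "x \<in> cube n"
      then have "f x = -1 \<or> f x = 1" by (rule fv)
      then show "real_of_int (f x) * (\<Prod>i<n. wt \<rho> (x i) (y i)) = W y x - 2 * (if f x = -1 then W y x else 0)"
        by (auto simp: W_def)
    qed
    also have "\<dots> = Top \<rho> n (\<lambda>_. 1) y - 2 * (\<Sum>x\<in>{x\<in>cube n. f x = -1}. W y x)"
      unfolding W_def Top_def by (simp add: sum_subtractf sum_distrib_left[symmetric] sum.inter_filter[OF fin])
    finally show ?thesis by (simp add: Top_one c1)
  qed
  obtain j where kj: "k = Suc j" using assms(3) by (cases k) auto
  define s where "s = sqrt (2 * real k - 1)"
  have s1: "s \<ge> 1" using assms(3) by (simp add: s_def)
  have s2: "s^2 = 2 * real k - 1" using assms(3) by (simp add: s_def)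
  define \<sigma> where "\<sigma> = 1 / s"
  define \<tau> where "\<tau> = \<rho> * s"
  have st: "\<sigma> * \<tau> = \<rho>" using s1 by (simp add: \<sigma>_def \<tau>_def)
  have hs: "\<sigma>^2 * (2*real (Suc j) - 1) \<le> 1"
    using s1 s2 kj by (simp add: \<sigma>_def power_divide)
  have \<tau>0: "0 \<le> \<tau>" using \<rho>0 s1 by (simp add: \<tau>_def)
  have \<tau>1: "\<tau> \<le> 1" using assms(4) by (simp add: \<tau>_def \<rho>_def s_def)
  have \<tau>2: "\<tau>^2 \<le> 1" using \<tau>0 \<tau>1 by (simp add: power_le_one)
  have LHS: "(\<Sum>y\<in>cube n. probY \<alpha> n y * (1 - 2 * condP \<alpha> n f y) ^ (2 * k))
      = (\<Sum>y\<in>cube n. (Top (\<sigma>*\<tau>) n F y)^(2*Suc j)) / 2^n"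
    unfolding st kj[symmetric] by (simp add: pY cP sum_divide_distrib)
  have H: "(\<Sum>y\<in>cube n. (Top (\<sigma>*\<tau>) n F y)^(2*Suc j)) / 2^n \<le> ((\<Sum>y\<in>cube n. (Top \<tau> n F y)^2) / 2^n)^Suc j"
    by (rule hyper[OF hs])
  have sF: "(\<Sum>x\<in>cube n. F x) = 0"
  proof -
    have "(\<Sum>x\<in>cube n. F x) = (\<Sum>x\<in>cube n. 1 - 2 * (if f x = -1 then 1 else 0))"
      unfolding F_def using fv by (intro sum.cong refl) force
    also have "\<dots> = real (card (cube n)) - 2 * real (card {x\<in>cube n. f x = -1})"
    proof -
      have cc: "real (card {x\<in>cube n. f x = -1}) = (\<Sum>x\<in>cube n. if f x = -1 then 1 else 0)"
        unfolding real_of_card by (rule sum.inter_filter[OF fin])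
      show ?thesis unfolding cc by (simp add: sum_subtractf sum_distrib_left[symmetric])
    qed
    also have "\<dots> = 0" using assms(6) by (simp add: balanced_def card_cube field_simps)
    finally show ?thesis .
  qed
  have sF2: "(\<Sum>x\<in>cube n. (F x)^2) = 2^n"
  proof -
    have "(\<Sum>x\<in>cube n. (F x)^2) = (\<Sum>x\<in>cube n. 1)"
      unfolding F_def using fv by (intro sum.cong refl) force
    then show ?thesis by (simp add: card_cube)
  qed
  have V: "(\<Sum>y\<in>cube n. (Top \<tau> n F y)^2) / 2^n \<le> \<tau>^2"
    using variance[OF \<tau>2, of n F] by (simp add: sF sF2 divide_le_eq)
  have V0: "0 \<le> (\<Sum>y\<in>cube n. (Top \<tau> n F y)^2) / 2^n" by (simp add: sum_nonneg)
  have "((\<Sum>y\<in>cube n. (Top \<tau> n F y)^2) / 2^n)^Suc j \<le> (\<tau>^2)^Suc j"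
    by (rule power_mono[OF V V0])
  also have "\<dots> = (2 * real k - 1) ^ k * (1 - 2 * \<alpha>) ^ (2 * k)"
  proof -
    have "(\<tau>^2)^Suc j = (s^2)^k * (\<rho>^2)^k" unfolding kj \<tau>_def
      by (simp only: power_mult_distrib mult.commute)
    also have "(\<rho>^2)^k = \<rho>^(2*k)" by (rule power_mult[symmetric])
    finally show ?thesis by (simp add: s2 \<rho>_def)
  qed
  finally show ?thesis using LHS H by linarith
qed

end
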